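(* Let $(V,Y,\mathbf{1})$ be a vertex operator algebra, $W$ a vector space and $Y_W:V\otimes W\to W((x))$ a linear map, written $u\otimes w\mapsto Y_W(u,x)w=\sum_{n\in\mathbb{Z}}u_nw\,x^{-n-1}$ (so $u_n=\mathrm{Res}_x x^nY_W(u,x)$). Let $u,v\in V$, $w\in W$ and $k,l\in\mathbb{Z}$ such that $v_nw=0$ for all $n\ge k$ and $u_nw=0$ for all $n\ge l$. Assume: (i) for all $p,q\in\mathbb{Z}$ with $q<k$, $$\mathrm{Res}_{x_0}\mathrm{Res}_{x_2}(x_0+x_2)^px_2^qY_W(u,x_0+x_2)Y_W(v,x_2)w=\mathrm{Res}_{x_0}\mathrm{Res}_{x_2}\,P_{p,q}(x_0,x_2)\,x_2^q(x_0+x_2)^lY_W(Y(u,x_0)v,x_2)w,$$ where $P_{p,q}(x_0,x_2)=\sum_{i=0}^{k-q-1}\binom{p-l}{i}x_0^{p-l-i}x_2^i$ (equivalently, $u_pv_qw=\sum_{i=0}^{k-q-1}\sum_{j=0}^{l}\binom{p-l}{i}\binom{l}{j}(u_{p-l-i+j}v)_{q+l+i-j}w$); (ii) for all $p,q\in\mathbb{Z}$ and all integers $i\ge k-q$, $$\mathrm{Res}_{x_0}\mathrm{Res}_{x_2}\,x_0^{p-l-i}x_2^{q+i}(x_0+x_2)^{l}\,Y_W(Y(u,x_0)v,x_2)w=0.$$ Then $$(x_0+x_2)^lY_W(u,x_0+x_2)Y_W(v,x_2)w=(x_0+x_2)^lY_W(Y(u,x_0)v,x_2)w.$$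
   Context: $Y(u,x)=\sum_n u_nx^{-n-1}$ denotes the vertex operator of $V$. Expressions $(x_0+x_2)^n$ (for any $n\in\mathbb{Z}$) and $Y_W(u,x_0+x_2)=\sum_n u_n(x_0+x_2)^{-n-1}$ are expanded in nonnegative powers of $x_2$. *)

theory Defs
  imports Complex_Main "HOL-Library.Groups_Big_Fun"
begin

text \<open>A vertex operator Y(u,x)v = sum_n u_n v x^(-n-1) is represented by its modes:
  Y u n v = u_n v.  Formal series in two variables x0, x2 with coefficients
  in W are represented as coefficient functions  F a b = coefficient of
  x0^a x2^b.\<close>

definition is_VOA ::
  "(complex \<Rightarrow> 'v::ab_group_add \<Rightarrow> 'v) \<Rightarrow> ('v \<Rightarrow> int \<Rightarrow> 'v \<Rightarrow> 'v) \<Rightarrow> 'v \<Rightarrow> 'v \<Rightarrow> complex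
     \<Rightarrow> (int \<Rightarrow> 'v set) \<Rightarrow> bool" where
  "is_VOA sc Y vac om c gr \<longleftrightarrow>
     vector_space sc \<and>
     \<comment> \<open>grading V = direct sum of V_(n), finite-dimensional, bounded below\<close>
     (\<forall>n. module.subspace sc (gr n)) \<and>
     (\<forall>n. \<exists>B. finite B \<and> B \<subseteq> gr n \<and> gr n \<subseteq> module.span sc B) \<and>
     (\<exists>N. \<forall>n<N. gr n = {0}) \<and>
     (\<forall>v. \<exists>!f. finite {n. f n \<noteq> 0} \<and> (\<forall>n. f n \<in> gr n) \<and> v = Sum_any f) \<and>
     \<comment> \<open>Y : V \<otimes> V \<rightarrow> V[[x,x^-1]] linear\<close>
     (\<forall>n v. Vector_Spaces.linear sc sc (\<lambda>u. Y u n v)) \<and>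
     (\<forall>u n. Vector_Spaces.linear sc sc (Y u n)) \<and>
     \<comment> \<open>truncation\<close>
     (\<forall>u v. \<exists>N. \<forall>n\<ge>N. Y u n v = 0) \<and>
     \<comment> \<open>vacuum property Y(1,x) = id\<close>
     (\<forall>n v. Y vac n v = (if n = -1 then v else 0)) \<and>
     \<comment> \<open>creation property\<close>
     (\<forall>v. (\<forall>n\<ge>0. Y v n vac = 0) \<and> Y v (-1) vac = v) \<and>
     \<comment> \<open>Jacobi identity, in component (Borcherds) form\<close>
     (\<forall>u v w p q r.
        (\<Sum>i::nat. sc ((of_int p) gchoose i) (Y (Y u (r + int i) v) (p + q - int i) w))
      = (\<Sum>i::nat. sc ((-1)^i * ((of_int r) gchoose i)) (Y u (p + r - int i) (Y v (q + int i) w)))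
      - (\<Sum>i::nat. sc ((-1)^i * ((-1) powi r) * ((of_int r) gchoose i))
                      (Y v (q + r - int i) (Y u (p + int i) w)))) \<and>
     \<comment> \<open>Virasoro relations, L(n) = omega_(n+1), central charge c\<close>
     (\<forall>m n v. Y om (m + 1) (Y om (n + 1) v) - Y om (n + 1) (Y om (m + 1) v)
        = sc (of_int (m - n)) (Y om (m + n + 1) v)
          + (if m + n = 0 then sc ((of_int m ^ 3 - of_int m) / 12 * c) v else 0)) \<and>
     \<comment> \<open>L(0) v = n v for v in V_(n)\<close>
     (\<forall>n. \<forall>v\<in>gr n. Y om 1 v = sc (of_int n) v) \<and>
     \<comment> \<open>L(-1)-derivative property: Y(L(-1)u,x) = d/dx Y(u,x)\<close>
     (\<forall>u n v. Y (Y om 0 u) n v = sc (- of_int n) (Y u (n - 1) v))"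

definition is_vertex_map ::
  "(complex \<Rightarrow> 'v::ab_group_add \<Rightarrow> 'v) \<Rightarrow> (complex \<Rightarrow> 'w::ab_group_add \<Rightarrow> 'w)
     \<Rightarrow> ('v \<Rightarrow> int \<Rightarrow> 'w \<Rightarrow> 'w) \<Rightarrow> bool" where
  "is_vertex_map sc scW YW \<longleftrightarrow>
     vector_space scW \<and>
     (\<forall>n w. Vector_Spaces.linear sc scW (\<lambda>u. YW u n w)) \<and>
     (\<forall>u n. Vector_Spaces.linear scW scW (YW u n)) \<and>
     (\<forall>u w. \<exists>N. \<forall>n\<ge>N. YW u n w = 0)"

definition ser_mult ::
  "(complex \<Rightarrow> 'w::ab_group_add \<Rightarrow> 'w) \<Rightarrow> (int \<Rightarrow> int \<Rightarrow> complex) \<Rightarrow> (int \<Rightarrow> int \<Rightarrow> 'w)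
     \<Rightarrow> int \<Rightarrow> int \<Rightarrow> 'w" where
  "ser_mult scW f F = (\<lambda>a b. \<Sum>ij. scW (f (fst ij) (snd ij)) (F (a - fst ij) (b - snd ij)))"

text \<open>(x0+x2)^p expanded in nonnegative powers of x2.\<close>
definition binom_ser :: "int \<Rightarrow> int \<Rightarrow> int \<Rightarrow> complex" where
  "binom_ser p = (\<lambda>a b. if 0 \<le> b \<and> a + b = p then (of_int p) gchoose (nat b) else 0)"

definition mono_ser :: "int \<Rightarrow> int \<Rightarrow> int \<Rightarrow> int \<Rightarrow> complex" where
  "mono_ser i j = (\<lambda>a b. if a = i \<and> b = j then 1 else 0)"

definition P_ser :: "int \<Rightarrow> int \<Rightarrow> int \<Rightarrow> int \<Rightarrow> int \<Rightarrow> int \<Rightarrow> complex" where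
  "P_ser k l p q = (\<lambda>a b. if 0 \<le> b \<and> b \<le> k - q - 1 \<and> a = p - l - b
                          then (of_int (p - l)) gchoose (nat b) else 0)"

definition Res2 :: "(int \<Rightarrow> int \<Rightarrow> 'w) \<Rightarrow> 'w" where
  "Res2 F = F (-1) (-1)"

text \<open>Y_W(u,x0+x2) Y_W(v,x2) w
   = sum_{n,m} u_n v_m w (x0+x2)^(-n-1) x2^(-m-1),
   with (x0+x2)^(-n-1) = sum_{j>=0} binom(-n-1,j) x0^(-n-1-j) x2^j;
   the coefficient of x0^a x2^b collects n = -1-j-a, m = j-1-b.\<close>
definition prod_ser ::
  "(complex \<Rightarrow> 'w::ab_group_add \<Rightarrow> 'w) \<Rightarrow> ('v \<Rightarrow> int \<Rightarrow> 'w \<Rightarrow> 'w) \<Rightarrow> 'v \<Rightarrow> 'v \<Rightarrow> 'w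
     \<Rightarrow> int \<Rightarrow> int \<Rightarrow> 'w" where
  "prod_ser scW YW u v w = (\<lambda>a b. \<Sum>j::nat.
      scW ((of_int (a + int j)) gchoose j) (YW u (-1 - int j - a) (YW v (int j - 1 - b) w)))"

text \<open>Y_W(Y(u,x0)v,x2) w = sum_{n,m} (u_n v)_m w x0^(-n-1) x2^(-m-1).\<close>
definition iter_ser ::
  "('v \<Rightarrow> int \<Rightarrow> 'v \<Rightarrow> 'v) \<Rightarrow> ('v \<Rightarrow> int \<Rightarrow> 'w \<Rightarrow> 'w) \<Rightarrow> 'v \<Rightarrow> 'v \<Rightarrow> 'w
     \<Rightarrow> int \<Rightarrow> int \<Rightarrow> 'w" where
  "iter_ser Y YW u v w = (\<lambda>a b. YW (Y u (-a - 1) v) (-b - 1) w)"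

end

theory Submission
  imports Defs "HOL-Computational_Algebra.Formal_Power_Series"
begin

lemma Sum_any_single:
  fixes g :: "'b \<Rightarrow> 'a::comm_monoid_add"
  assumes "\<And>x. x \<noteq> a \<Longrightarrow> g x = 0"
  shows "Sum_any g = g a"
proof -
  have "Sum_any g = sum g {a}"
    by (rule Sum_any.expand_superset) (use assms in auto)
  then show ?thesis by simp
qed

lemma Sum_any_diag:
  fixes g :: "int \<times> int \<Rightarrow> 'a::comm_monoid_add"
  assumes "\<And>x y. g (x,y) \<noteq> 0 \<Longrightarrow> 0 \<le> y \<and> y < int N \<and> x = p - y"
  shows "Sum_any g = (\<Sum>t<N. g (p - int t, int t))"
proof -
  have "Sum_any g = sum g ((\<lambda>t. (p - int t, int t)) ` {..<N})"
  proof (rule Sum_any.expand_superset)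
    show "{a. g a \<noteq> 0} \<subseteq> (\<lambda>t. (p - int t, int t)) ` {..<N}"
    proof
      fix z assume "z \<in> {a. g a \<noteq> 0}"
      then obtain x y where z: "z = (x,y)" and "g (x,y) \<noteq> 0" by (cases z) auto
      then have h: "0 \<le> y \<and> y < int N \<and> x = p - y" using assms by blast
      then have "z = (\<lambda>t. (p - int t, int t)) (nat y)" "nat y \<in> {..<N}" using z by auto
      then show "z \<in> (\<lambda>t. (p - int t, int t)) ` {..<N}" by blast
    qed
  qed simp
  also have "\<dots> = (\<Sum>t<N. g (p - int t, int t))"
    by (subst sum.reindex) (auto simp: inj_on_def)
  finally show ?thesis .
qed

lemma mono_mult:
  assumes "vector_space scW"
  shows "ser_mult scW (mono_ser i j) F a b = F (a - i) (b - j)"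
proof -
  interpret W: vector_space scW by (rule assms)
  have "ser_mult scW (mono_ser i j) F a b
      = (\<lambda>ij. scW (mono_ser i j (fst ij) (snd ij)) (F (a - fst ij) (b - snd ij))) (i,j)"
    unfolding ser_mult_def
    by (rule Sum_any_single) (auto simp: mono_ser_def)
  then show ?thesis by (simp add: mono_ser_def)
qed

lemma (in module) cauchy_sum:
  fixes f g :: "nat \<Rightarrow> 'a"
  assumes "\<And>t. t \<ge> K \<Longrightarrow> h t = 0"
  shows "(\<Sum>i<K. \<Sum>d<K. (f i * g d) *s h (i+d)) = (\<Sum>t<K. (\<Sum>i\<le>t. f i * g (t-i)) *s h t)"
proof -
  have "(\<Sum>i<K. \<Sum>d<K. (f i * g d) *s h (i+d)) = (\<Sum>(i,d)\<in>{..<K}\<times>{..<K}. (f i * g d) *s h (i+d))"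
    by (simp add: sum.cartesian_product)
  also have "\<dots> = (\<Sum>(i,d)\<in>{(i,d). i+d < K}. (f i * g d) *s h (i+d))"
    by (rule sum.mono_neutral_right) (auto, metis assms not_less scale_zero_right)
  also have "\<dots> = (\<Sum>t<K. \<Sum>i\<le>t. (f i * g (t-i)) *s h (i + (t-i)))"
    by (rule sum.triangle_reindex)
  also have "\<dots> = (\<Sum>t<K. (\<Sum>i\<le>t. f i * g (t-i)) *s h t)"
    by (simp add: scale_sum_left)
  finally show ?thesis .
qed

lemma gchoose_int_zero:
  assumes "0 \<le> l" "nat l < d"
  shows "((of_int l :: complex) gchoose d) = 0"
proof -
  have "(of_int l :: complex) = of_nat (nat l)" using assms by simp
  then have "((of_int l :: complex) gchoose d) = of_nat (nat l choose d)"
    by (simp add: binomial_gbinomial)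
  then show ?thesis using assms by (simp add: binomial_eq_0)
qed

theorem theorem3p1:
  fixes sc :: "complex \<Rightarrow> 'v::ab_group_add \<Rightarrow> 'v"
    and Y :: "'v \<Rightarrow> int \<Rightarrow> 'v \<Rightarrow> 'v"
    and vac om :: 'v and c :: complex and gr :: "int \<Rightarrow> 'v set"
    and scW :: "complex \<Rightarrow> 'w::ab_group_add \<Rightarrow> 'w"
    and YW :: "'v \<Rightarrow> int \<Rightarrow> 'w \<Rightarrow> 'w"
    and u v :: 'v and w :: 'w and k l :: int
  assumes VOA: "is_VOA sc Y vac om c gr"
    and YW: "is_vertex_map sc scW YW"
    and l_nonneg: "0 \<le> l"
    and v_trunc: "\<forall>n\<ge>k. YW v n w = 0"
    and u_trunc: "\<forall>n\<ge>l. YW u n w = 0"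
    and hyp_i: "\<forall>p q. q < k \<longrightarrow>
        Res2 (ser_mult scW (binom_ser p) (ser_mult scW (mono_ser 0 q) (prod_ser scW YW u v w)))
      = Res2 (ser_mult scW (P_ser k l p q) (ser_mult scW (mono_ser 0 q)
                (ser_mult scW (binom_ser l) (iter_ser Y YW u v w))))"
    and hyp_ii: "\<forall>p q i. i \<ge> k - q \<longrightarrow>
        Res2 (ser_mult scW (mono_ser (p - l - i) (q + i))
                (ser_mult scW (binom_ser l) (iter_ser Y YW u v w))) = 0"
  shows "ser_mult scW (binom_ser l) (prod_ser scW YW u v w)
       = ser_mult scW (binom_ser l) (iter_ser Y YW u v w)"
proof -
  interpret W: vector_space scW using YW unfolding is_vertex_map_def by blast
  have VS: "vector_space scW" by (rule W.vector_space_axioms)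
  have linu: "Vector_Spaces.linear scW scW (YW u n)" for n
    using YW unfolding is_vertex_map_def by blast
  have YW0: "YW u n 0 = 0" for n
    using vector_space_pair.linear_0[OF _ linu] VS by (simp add: vector_space_pair_def)
  define M where "M = prod_ser scW YW u v w"
  define Lr where "Lr = ser_mult scW (binom_ser l) M"
  define Rr where "Rr = ser_mult scW (binom_ser l) (iter_ser Y YW u v w)"
  have M0: "M a b = 0" if "b \<le> -1-k" for a b
  proof -
    have "\<And>j::nat. YW v (int j - 1 - b) w = 0" using v_trunc that by auto
    then show ?thesis unfolding M_def prod_ser_def by (simp add: YW0)
  qed
  have Lexp: "Lr a b = (\<Sum>d<Suc (nat l). scW (of_int l gchoose d) (M (a - (l - int d)) (b - int d)))" for a b
    unfolding Lr_def ser_mult_def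
  proof (subst Sum_any_diag[where N="Suc (nat l)" and p=l])
    fix x y
    assume "scW (binom_ser l (fst (x, y)) (snd (x, y))) (M (a - fst (x, y)) (b - snd (x, y))) \<noteq> 0"
    then have "binom_ser l x y \<noteq> 0" by auto
    then have "0 \<le> y" "x = l - y" "((of_int l :: complex) gchoose nat y) \<noteq> 0"
      unfolding binom_ser_def by (auto split: if_splits)
    moreover have "nat y \<le> nat l"
      using gchoose_int_zero[OF l_nonneg, of "nat y"] calculation by force
    ultimately show "0 \<le> y \<and> y < int (Suc (nat l)) \<and> x = l - y" using l_nonneg by auto
  next
    show "(\<Sum>t<Suc (nat l). scW (binom_ser l (fst (l - int t, int t)) (snd (l - int t, int t)))
        (M (a - fst (l - int t, int t)) (b - snd (l - int t, int t)))) =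
      (\<Sum>d<Suc (nat l). scW (of_int l gchoose d) (M (a - (l - int d)) (b - int d)))"
      by (simp add: binom_ser_def)
  qed
  have L0: "Lr a b = 0" if "b \<le> -1-k" for a b
    unfolding Lexp using that by (simp add: M0)
  have R0: "Rr a b = 0" if "b \<le> -1-k" for a b
  proof -
    have "Res2 (ser_mult scW (mono_ser (l - 1 - a - l - 0) (-1 - b + 0)) Rr) = 0"
      using hyp_ii that unfolding Rr_def by (intro spec[of _ 0, OF spec[of _ "-1-b", OF spec[of _ "l-1-a", OF hyp_ii]], THEN mp]) simp
    then show ?thesis unfolding Res2_def mono_mult[OF VS] by simp
  qed
  have hypL: "Res2 (ser_mult scW (binom_ser p) (ser_mult scW (mono_ser 0 q) M))
     = (\<Sum>t<nat(k-q). scW (of_int p gchoose t) (M (-1 - p + int t) (-1 - q - int t)))" for p q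
    unfolding Res2_def ser_mult_def[of scW "binom_ser p"] mono_mult[OF VS]
  proof (subst Sum_any_diag[where N="nat(k-q)" and p=p])
    fix x y
    assume "scW (binom_ser p (fst (x, y)) (snd (x, y))) (M (- 1 - fst (x, y) - 0) (- 1 - snd (x, y) - q)) \<noteq> 0"
    then have "binom_ser p x y \<noteq> 0" "M (- 1 - x - 0) (- 1 - y - q) \<noteq> 0" by auto
    then have "0 \<le> y" "x = p - y" "\<not> (- 1 - y - q \<le> -1-k)"
      unfolding binom_ser_def using M0 by (auto split: if_splits)
    then show "0 \<le> y \<and> y < int (nat (k-q)) \<and> x = p - y" by auto
  next
    show "(\<Sum>t<nat (k - q). scW (binom_ser p (fst (p - int t, int t)) (snd (p - int t, int t)))
        (M (- 1 - fst (p - int t, int t) - 0) (- 1 - snd (p - int t, int t) - q))) =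
      (\<Sum>t<nat(k-q). scW (of_int p gchoose t) (M (-1 - p + int t) (-1 - q - int t)))"
      by (rule sum.cong) (simp_all add: binom_ser_def algebra_simps)
  qed
  have hypR: "Res2 (ser_mult scW (P_ser k l p q) (ser_mult scW (mono_ser 0 q) Rr))
     = (\<Sum>t<nat(k-q). scW (of_int (p-l) gchoose t) (Rr (-1 - (p-l) + int t) (-1 - q - int t)))" for p q
    unfolding Res2_def ser_mult_def[of scW "P_ser k l p q"] mono_mult[OF VS]
  proof (subst Sum_any_diag[where N="nat(k-q)" and p="p-l"])
    fix x y
    assume "scW (P_ser k l p q (fst (x, y)) (snd (x, y))) (Rr (- 1 - fst (x, y) - 0) (- 1 - snd (x, y) - q)) \<noteq> 0"
    then have "P_ser k l p q x y \<noteq> 0" by auto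
    then show "0 \<le> y \<and> y < int (nat (k-q)) \<and> x = p - l - y"
      unfolding P_ser_def by (auto split: if_splits)
  next
    show "(\<Sum>t<nat (k - q). scW (P_ser k l p q (fst (p - l - int t, int t)) (snd (p - l - int t, int t)))
        (Rr (- 1 - fst (p - l - int t, int t) - 0) (- 1 - snd (p - l - int t, int t) - q))) =
      (\<Sum>t<nat(k-q). scW (of_int (p-l) gchoose t) (Rr (-1 - (p-l) + int t) (-1 - q - int t)))"
      by (rule sum.cong) (auto simp add: P_ser_def algebra_simps)
  qed
  have keyA: "(\<Sum>i<nat(k-q). scW (of_int s gchoose i) (Lr (-1 - s + int i) (-1 - q - int i)))
     = (\<Sum>t<nat(k-q). scW (of_int (s+l) gchoose t) (M (-1 - (s+l) + int t) (-1 - q - int t)))" for s q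
  proof -
    define N where "N = nat(k-q)"
    define K where "K = N + Suc (nat l)"
    define h where "h t = M (-1 - (s+l) + int t) (-1 - q - int t)" for t :: nat
    define f where "f i = (of_int s gchoose i :: complex)" for i
    define g where "g d = (of_int l gchoose d :: complex)" for d
    have h0: "h t = 0" if "t \<ge> N" for t
      unfolding h_def using that N_def by (intro M0) linarith
    have g0: "g d = 0" if "d \<ge> Suc (nat l)" for d
      unfolding g_def using that by (intro gchoose_int_zero l_nonneg) simp
    have "(\<Sum>i<nat(k-q). scW (of_int s gchoose i) (Lr (-1 - s + int i) (-1 - q - int i)))
        = (\<Sum>i<N. \<Sum>d<Suc (nat l). scW (f i * g d) (h (i+d)))"
      unfolding Lexp N_def
    proof (rule sum.cong[OF refl])
      fix i assume "i \<in> {..<nat (k - q)}"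
      have "scW (of_int s gchoose i) (\<Sum>d<Suc (nat l). scW (of_int l gchoose d)
              (M (- 1 - s + int i - (l - int d)) (- 1 - q - int i - int d)))
          = (\<Sum>d<Suc (nat l). scW (of_int s gchoose i) (scW (of_int l gchoose d)
              (M (- 1 - s + int i - (l - int d)) (- 1 - q - int i - int d))))"
        by (rule W.scale_sum_right)
      also have "\<dots> = (\<Sum>d<Suc (nat l). scW (f i * g d) (h (i+d)))"
      proof (rule sum.cong[OF refl])
        fix d
        have eqs: "- 1 - s + int i - (l - int d) = -1 - (s+l) + int (i+d)"
             "- 1 - q - int i - int d = -1 - q - int (i+d)" by simp_all
        then show "scW (of_int s gchoose i) (scW (of_int l gchoose d)
              (M (- 1 - s + int i - (l - int d)) (- 1 - q - int i - int d))) = scW (f i * g d) (h (i+d))"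
          unfolding h_def f_def g_def eqs[symmetric] by simp
      qed
      finally show "scW (of_int s gchoose i) (\<Sum>d<Suc (nat l). scW (of_int l gchoose d)
              (M (- 1 - s + int i - (l - int d)) (- 1 - q - int i - int d)))
          = (\<Sum>d<Suc (nat l). scW (f i * g d) (h (i+d)))" .
    qed
    also have "\<dots> = (\<Sum>i<N. \<Sum>d<K. scW (f i * g d) (h (i+d)))"
      by (rule sum.cong[OF refl], rule sum.mono_neutral_left) (auto simp: K_def g0)
    also have "\<dots> = (\<Sum>i<K. \<Sum>d<K. scW (f i * g d) (h (i+d)))"
      by (rule sum.mono_neutral_left) (auto simp: K_def h0)
    also have "\<dots> = (\<Sum>t<K. scW (\<Sum>i\<le>t. f i * g (t-i)) (h t))"
      by (rule W.cauchy_sum) (simp add: K_def h0)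
    also have "\<dots> = (\<Sum>t<K. scW (of_int (s+l) gchoose t) (h t))"
      unfolding f_def g_def atMost_atLeast0 gbinomial_Vandermonde by simp
    also have "\<dots> = (\<Sum>t<N. scW (of_int (s+l) gchoose t) (h t))"
      by (rule sum.mono_neutral_right) (auto simp: K_def h0)
    finally show ?thesis unfolding N_def h_def .
  qed
  have E: "(\<Sum>i<nat(k-q). scW (of_int s gchoose i) (Lr (-1-s+int i) (-1-q-int i)))
      = (\<Sum>i<nat(k-q). scW (of_int s gchoose i) (Rr (-1-s+int i) (-1-q-int i)))" if "q < k" for s q
  proof -
    have hi: "Res2 (ser_mult scW (binom_ser (s+l)) (ser_mult scW (mono_ser 0 q) M))
      = Res2 (ser_mult scW (P_ser k l (s+l) q) (ser_mult scW (mono_ser 0 q) Rr))"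
      using hyp_i that unfolding M_def Rr_def by blast
    show ?thesis using keyA[of s q] hi unfolding hypL hypR by simp
  qed
  have main: "\<forall>b. b < -k + int n \<longrightarrow> (\<forall>a. Lr a b = Rr a b)" for n :: nat
  proof (induction n)
    case 0 then show ?case using L0 R0 by auto
  next
    case (Suc n)
    show ?case
    proof (intro allI impI)
      fix b a assume b: "b < -k + int (Suc n)"
      show "Lr a b = Rr a b"
      proof (cases "b < -k + int n")
        case True with Suc.IH show ?thesis by blast
      next
        case False
        hence bb: "b = -k + int n" using b by simp
        define s where "s = -1-a"
        define q where "q = -1-b"
        have qk: "q < k" using bb q_def by simp
        have N: "nat(k-q) = Suc n" using bb q_def by simp
        have tail: "Lr (-1-s+int (Suc i)) (-1-q-int (Suc i)) = Rr (-1-s+int (Suc i)) (-1-q-int (Suc i))" for i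
          using Suc.IH bb q_def by simp
        have "scW (of_int s gchoose 0) (Lr (-1-s+int 0) (-1-q-int 0))
           + (\<Sum>i<n. scW (of_int s gchoose Suc i) (Lr (-1-s+int (Suc i)) (-1-q-int (Suc i))))
           = scW (of_int s gchoose 0) (Rr (-1-s+int 0) (-1-q-int 0))
           + (\<Sum>i<n. scW (of_int s gchoose Suc i) (Rr (-1-s+int (Suc i)) (-1-q-int (Suc i))))"
          using E[OF qk, of s] unfolding N sum.lessThan_Suc_shift .
        then have "Lr (-1-s) (-1-q) = Rr (-1-s) (-1-q)" unfolding tail by simp
        then show ?thesis unfolding s_def q_def by simp
      qed
    qed
  qed
  have "Lr = Rr"
  proof (intro ext)
    fix a b
    show "Lr a b = Rr a b" using main[of "nat (b + k + 1)"] by auto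
  qed
  then show ?thesis unfolding Lr_def Rr_def M_def .
qed

end
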